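(* Let $h>0$ and let $\alpha:\mathbb R\to\mathbb R^2$ be a regular curve parametrized by arc length whose signed curvature satisfies $k(s)=K(\tau(s),\mu(s))$ for all $s$, where $\tau=\langle\alpha,\alpha'\rangle$ and $\mu=\langle\alpha,J\alpha'\rangle$. Then $\alpha(s)\neq0$ for $|s|$ sufficiently large, and a continuous polar angle $\omega$ of $\alpha$ (i.e. $\alpha=|\alpha|(\cos\omega,\sin\omega)$), defined on each of the two unbounded intervals where $|s|$ is large, satisfies $\lim_{s\to+\infty}\omega(s)=+\infty$ and $\lim_{s\to-\infty}\omega(s)=+\infty$.
   Context: Fix $h>0$. For $(\tau,\mu)\in\mathbb R^2$ put $r^2=\tau^2+\mu^2$ and define $K:\mathbb R^2\to\mathbb R$ by $$K(\tau,\mu)=\frac{2\big(\tau^2+h^2(1+\mu^2)\big)\tau+(h^2-1)(1+\mu^2)\mu}{(1+r^2)(h^2+r^2)}.$$ $J(x_1,x_2)=(-x_2,x_1)$ on $\mathbb R^2$, $\langle\cdot,\cdot\rangle$ is the Euclidean inner product, and the signed curvature of an arc-length curve $\alpha$ is $k=\langle\alpha'',J\alpha'\rangle$. *)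

theory Defs
  imports "HOL-Analysis.Analysis"
begin

definition K :: "real \<Rightarrow> real \<Rightarrow> real \<Rightarrow> real" where
  "K h \<tau> \<mu> =
     (2 * (\<tau>^2 + h^2 * (1 + \<mu>^2)) * \<tau> + (h^2 - 1) * (1 + \<mu>^2) * \<mu>)
     / ((1 + (\<tau>^2 + \<mu>^2)) * (h^2 + (\<tau>^2 + \<mu>^2)))"

definition J :: "real \<times> real \<Rightarrow> real \<times> real" where
  "J x = (- snd x, fst x)"

end

theory Submission
  imports Defs
begin


definition NK :: "real \<Rightarrow> real \<Rightarrow> real \<Rightarrow> real" where
  "NK h t m = 2 * (t^2 + h^2 * (1 + m^2)) * t + (h^2 - 1) * (1 + m^2) * m"
definition DD :: "real \<Rightarrow> real \<Rightarrow> real \<Rightarrow> real" where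
  "DD h t m = (1 + (t^2 + m^2)) * (h^2 + (t^2 + m^2))"

lemma K_eq: "K h t m = NK h t m / DD h t m" unfolding K_def NK_def DD_def by simp

lemma DD_pos: "h > 0 \<Longrightarrow> DD h t m > 0"
  unfolding DD_def by (intro mult_pos_pos) (auto intro: add_pos_nonneg)

lemma tau_rhs:
  assumes h: "h > 0"
  shows "1 + K h t m * m = (DD h t m + NK h t m * m) / DD h t m"
proof -
  have "DD h t m > 0" using DD_pos[OF h] .
  thus ?thesis unfolding K_eq by (simp add: field_simps)
qed

lemma N2: "DD h t m + NK h t m * m \<ge> h^2*(1+m^2)^2 + 2*t*m*(t^2 + h^2*(1+m^2))"
proof -
  have "(1 + (t^2 + m^2)) * (h^2 + (t^2 + m^2)) \<ge> (1+m^2)*(h^2+m^2)"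
    by (intro mult_mono) auto
  moreover have "(1+m^2)*(h^2+m^2) + (h^2-1)*(1+m^2)*m^2 = h^2*(1+m^2)^2"
    by (simp add: algebra_simps power2_eq_square)
  moreover have "DD h t m + NK h t m * m = (1 + (t^2 + m^2)) * (h^2 + (t^2 + m^2)) + (h^2-1)*(1+m^2)*m^2 + 2*t*m*(t^2 + h^2*(1+m^2))"
    unfolding DD_def NK_def by (simp add: algebra_simps power2_eq_square)
  ultimately show ?thesis by linarith
qed

lemma P_id: "m * DD h t m + NK h t m * (t^2+m^2) = h^2*m + 2*h^2*(t^2+m^2)*(m+t) + (t^2+m^2)*(m+2*t)*(t^2+h^2*m^2)"
  unfolding DD_def NK_def by (simp add: algebra_simps power2_eq_square)

lemma q_rhs:
  assumes h: "h > 0" and t: "t \<noteq> 0"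
  shows "((-(K h t m * t)) * t - m * (1 + K h t m * m)) / t^2
     = - (m * DD h t m + NK h t m * (t^2+m^2)) / (t^2 * DD h t m)"
proof -
  have "DD h t m > 0" using DD_pos[OF h] .
  thus ?thesis unfolding K_eq using t by (simp add: field_simps power2_eq_square)
qed

lemma K_t0: "h > 0 \<Longrightarrow> 1 + K h 0 m * m > 0"
proof -
  assume h: "h > 0"
  have "DD h 0 m + NK h 0 m * m \<ge> h^2*(1+m^2)^2" using N2[where t=0 and m=m and h=h] by simp
  moreover have "h^2*(1+m^2)^2 > 0" using h by (intro mult_pos_pos zero_less_power) (auto intro: add_pos_nonneg)
  ultimately show ?thesis using tau_rhs[OF h, of 0 m] DD_pos[OF h, of 0 m] by simp
qed

lemma K_m0: "h > 0 \<Longrightarrow> t > 0 \<Longrightarrow> -(K h t 0 * t) < 0"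
proof -
  assume h: "h > 0" and t: "t > 0"
  have "NK h t 0 = 2 * (t^2 + h^2) * t" unfolding NK_def by simp
  moreover have "2 * (t^2 + h^2) * t > 0" using h t by (intro mult_pos_pos) (auto intro: add_pos_pos)
  ultimately have "NK h t 0 > 0" by simp
  hence "K h t 0 > 0" using DD_pos[OF h, of t 0] K_eq by simp
  thus ?thesis using t by simp
qed

lemma K_odd: "K h (-t) (-m) = - K h t m"
proof -
  have "NK h (-t) (-m) = - NK h t m" unfolding NK_def by (simp add: algebra_simps)
  moreover have "DD h (-t) (-m) = DD h t m" unfolding DD_def by simp
  ultimately show ?thesis unfolding K_eq by simp
qed




lemma barrier:
  fixes g g' :: "real \<Rightarrow> real"
  assumes der: "\<And>t. t \<ge> a \<Longrightarrow> (g has_real_derivative g' t) (at t)"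
    and start: "g a < 0"
    and bd: "\<And>t. t \<ge> a \<Longrightarrow> g t = 0 \<Longrightarrow> g' t < 0"
    and b: "b \<ge> a"
  shows "g b < 0"
proof (rule ccontr)
  assume "\<not> g b < 0"
  hence gb: "g b \<ge> 0" by simp
  have cont: "continuous_on {a..b} g"
    by (intro continuous_at_imp_continuous_on ballI) (meson DERIV_isCont atLeastAtMost_iff der)
  define Z where "Z = {x \<in> {a..b}. g x = 0}"
  have Zne: "Z \<noteq> {}" using IVT'[of g a 0 b, OF _ gb b cont] start unfolding Z_def by force
  have Zcl: "closed Z" unfolding Z_def by (rule continuous_closed_preimage_constant[OF cont]) simp
  have Zbd: "bdd_below Z" unfolding Z_def by (auto intro: bdd_belowI[where m=a])
  define t0 where "t0 = Inf Z"
  have t0Z: "t0 \<in> Z" using closed_contains_Inf[OF Zne Zbd Zcl] t0_def by simp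
  hence t0: "a \<le> t0" "t0 \<le> b" "g t0 = 0" unfolding Z_def by auto
  have "t0 \<noteq> a" using t0 start by auto
  hence at0: "a < t0" using t0 by simp
  have neg: "g t < 0" if tt: "a \<le> t" "t < t0" for t
  proof (rule ccontr)
    assume "\<not> g t < 0"
    hence "g t \<ge> 0" by simp
    have ct: "continuous_on {a..t} g" using cont by (rule continuous_on_subset) (use that t0 in auto)
    obtain x where x: "a \<le> x" "x \<le> t" "g x = 0" using IVT'[of g a 0 t, OF _ \<open>g t \<ge> 0\<close> tt(1) ct] start by force
    hence "x \<in> Z" unfolding Z_def using that t0 by auto
    hence "t0 \<le> x" unfolding t0_def using Zbd by (simp add: cInf_lower)
    thus False using x that by simp
  qed
  have "g' t0 < 0" using bd t0 at0 by simp
  then obtain d where d: "d > 0" "\<And>h. h > 0 \<Longrightarrow> h < d \<Longrightarrow> g t0 < g (t0 - h)"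
    using DERIV_neg_dec_left[OF der[of t0]] at0 by auto
  define hh where "hh = min (d/2) ((t0 - a)/2)"
  have "hh > 0" "hh < d" using d at0 by (auto simp: hh_def)
  hence "0 < g (t0 - hh)" using d(2) t0 by auto
  moreover have "a \<le> t0 - hh" using at0 min.cobounded2[of "d/2" "(t0-a)/2"] unfolding hh_def by (simp add: field_simps)
  hence "g (t0 - hh) < 0" using neg[of "t0 - hh"] \<open>hh > 0\<close> by simp
  ultimately show False by simp
qed

lemma incr:
  fixes f f' :: "real \<Rightarrow> real"
  assumes "\<And>t. a \<le> t \<Longrightarrow> t \<le> b \<Longrightarrow> (f has_real_derivative f' t) (at t)"
    and "\<And>t. a \<le> t \<Longrightarrow> t \<le> b \<Longrightarrow> f' t \<ge> 0" and "a \<le> b"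
  shows "f a \<le> f b"
proof (rule DERIV_nonneg_imp_increasing_open[OF assms(3)])
  show "continuous_on {a..b} f"
    by (intro continuous_at_imp_continuous_on ballI) (meson DERIV_isCont atLeastAtMost_iff assms(1))
qed (use assms in \<open>meson less_imp_le\<close>)

lemma log_bound:
  fixes f f' :: "real \<Rightarrow> real"
  assumes c: "c > 0" and B: "B + s0 > 0"
    and der: "\<And>t. t \<ge> s0 \<Longrightarrow> (f has_real_derivative f' t) (at t)"
    and le: "\<And>t. t \<ge> s0 \<Longrightarrow> f' t \<le> - c / (B + t)"
    and s: "s \<ge> s0"
  shows "f s \<le> f s0 + c * ln (B + s0) - c * ln (B + s)"
proof -
  have "(\<lambda>t. - f t - c * ln (B + t)) s0 \<le> (\<lambda>t. - f t - c * ln (B + t)) s"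
  proof (rule incr[OF _ _ s])
    fix t assume t: "s0 \<le> t" "t \<le> s"
    have Bt: "B + t > 0" using B t by simp
    show "((\<lambda>t. - f t - c * ln (B + t)) has_real_derivative (- f' t - c * (1 / (B + t)))) (at t)"
      using Bt by (auto intro!: derivative_eq_intros der t)
    show "- f' t - c * (1 / (B + t)) \<ge> 0" using le[OF t(1)] Bt by (simp add: field_simps)
  qed
  thus ?thesis by simp
qed

lemma ln_big:
  fixes c B X s0 :: real
  assumes "c > 0"
  shows "\<exists>s\<ge>s0. B + s > 0 \<and> c * ln (B + s) > X"
proof -
  define s where "s = max s0 (exp (X / c + 1) - B)"
  have "B + s \<ge> exp (X / c + 1)" unfolding s_def by simp
  hence p: "B + s > 0" using exp_gt_zero[of "X / c + 1"] by linarith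
  have "ln (exp (X / c + 1)) \<le> ln (B + s)" using \<open>B + s \<ge> exp (X / c + 1)\<close> p
    by (subst ln_le_cancel_iff) auto
  hence "ln (B + s) \<ge> X / c + 1" by simp
  hence "c * ln (B + s) \<ge> c * (X / c + 1)" using assms by (simp add: mult_left_mono)
  moreover have "c * (X / c + 1) = X + c" using assms by (simp add: field_simps)
  ultimately have "c * ln (B + s) > X" using assms by linarith
  moreover have "s \<ge> s0" unfolding s_def by simp
  ultimately show ?thesis using p by blast
qed




locale ode =
  fixes h L B :: real and \<tau> \<mu> :: "real \<Rightarrow> real"
  assumes h: "h > 0" and L: "L > 0" and B: "B > 0"
    and dt: "\<And>s. (\<tau> has_real_derivative (1 + K h (\<tau> s) (\<mu> s) * \<mu> s)) (at s)"
    and dm: "\<And>s. (\<mu> has_real_derivative (-(K h (\<tau> s) (\<mu> s) * \<tau> s))) (at s)"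
    and bt: "\<And>s. s \<ge> 0 \<Longrightarrow> \<bar>\<tau> s\<bar> \<le> L * (B + s)"
    and bm: "\<And>s. s \<ge> 0 \<Longrightarrow> \<bar>\<mu> s\<bar> \<le> L * (B + s)"
begin

definition "rho = (\<lambda>s. (\<tau> s)^2 + (\<mu> s)^2)"

lemma drho: "(rho has_real_derivative 2 * \<tau> s) (at s)"
proof -
  have "(rho has_real_derivative (2 * \<tau> s * (1 + K h (\<tau> s) (\<mu> s) * \<mu> s) + 2 * \<mu> s * (-(K h (\<tau> s) (\<mu> s) * \<tau> s)))) (at s)"
    unfolding rho_def by (auto intro!: derivative_eq_intros dt dm)
  moreover have "2 * \<tau> s * (1 + K h (\<tau> s) (\<mu> s) * \<mu> s) + 2 * \<mu> s * (-(K h (\<tau> s) (\<mu> s) * \<tau> s)) = 2 * \<tau> s"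
    by (simp add: algebra_simps)
  ultimately show ?thesis by simp
qed

lemma rho_nonneg: "rho s \<ge> 0" unfolding rho_def by simp

lemma abs_le_sq: "\<bar>m\<bar> \<le> 1 + (m::real)^2"
proof -
  have "0 \<le> (\<bar>m\<bar> - 1)^2 + \<bar>m\<bar>" by simp
  thus ?thesis by (simp add: power2_eq_square algebra_simps)
qed

lemma key_a:
  fixes t m r0 :: real
  assumes t: "-(h^2 / (4 * (1 + r0)^2 * (1 + h^2))) \<le> t" "t \<le> 0"
    and r: "t^2 + m^2 \<le> r0"
  shows "1 + K h t m * m \<ge> h^2 / (2 * (1 + r0) * (h^2 + r0))"
proof -
  define P0 where "P0 = 1 + r0"
  define \<delta> where "\<delta> = h^2 / (4 * P0^2 * (1 + h^2))"
  have r0: "r0 \<ge> 0" using r by (smt (verit) zero_le_power2)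
  have P0: "P0 > 0" "P0 \<ge> 1" using r0 by (auto simp: P0_def)
  have at: "\<bar>t\<bar> \<le> \<delta>" using t unfolding \<delta>_def P0_def by simp
  have am: "\<bar>m\<bar> \<le> P0" using abs_le_sq[of m] r unfolding P0_def by (smt (verit) zero_le_power2)
  have E: "t^2 + h^2*(1+m^2) \<le> (1+h^2)*P0"
  proof -
    have "t^2 \<le> P0" using r unfolding P0_def by (smt (verit) zero_le_power2)
    moreover have "h^2*(1+m^2) \<le> h^2 * P0" using r unfolding P0_def by (intro mult_left_mono) (auto, smt (verit) zero_le_power2)
    ultimately show ?thesis by (simp add: algebra_simps)
  qed
  have "\<bar>2*t*m*(t^2 + h^2*(1+m^2))\<bar> = 2*\<bar>t\<bar>*\<bar>m\<bar>*(t^2 + h^2*(1+m^2))"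
    by (simp add: abs_mult)
  also have "\<dots> \<le> 2*\<delta>*P0*((1+h^2)*P0)"
    using at am E by (intro mult_mono) auto
  also have "\<dots> = h^2/2"
  proof -
    have nz: "1 + h^2 \<noteq> 0" "P0 \<noteq> 0" using P0 by (auto simp: add_pos_nonneg) (smt (verit) zero_le_power2)
    have Qnz: "4 * P0^2 * (1 + h^2) \<noteq> 0" using nz by simp
    have e1: "2*\<delta>*P0*((1+h^2)*P0) = (2*P0*((1+h^2)*P0)) * h^2 / (4 * P0^2 * (1 + h^2))" unfolding \<delta>_def by simp
    have e2: "(2*P0*((1+h^2)*P0)) * h^2 = (h^2/2) * (4 * P0^2 * (1 + h^2))" by (simp add: algebra_simps power2_eq_square)
    show ?thesis unfolding e1 using Qnz e2 by (simp add: divide_eq_eq)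
  qed
  finally have X: "\<bar>2*t*m*(t^2 + h^2*(1+m^2))\<bar> \<le> h^2/2" .
  have Y: "h^2*(1+m^2)^2 \<ge> h^2"
  proof -
    have "(1+m^2)^2 \<ge> 1" by (simp add: add_pos_nonneg one_le_power)
    thus ?thesis using h by (simp add: mult_left_mono[of 1 _ "h^2", simplified])
  qed
  have X': "-(h^2/2) \<le> 2*t*m*(t^2 + h^2*(1+m^2))" using X by linarith
  have "h^2/2 + -(h^2/2) = (0::real)" by simp
  hence num: "DD h t m + NK h t m * m \<ge> h^2/2" using N2[where h=h and t=t and m=m] X' Y by linarith
  have D: "DD h t m \<le> P0 * (h^2 + r0)" unfolding DD_def P0_def using r r0 by (intro mult_mono) auto
  have Dp: "DD h t m > 0" using DD_pos[OF h] .
  have "h^2 / (2 * (1 + r0) * (h^2 + r0)) = (h^2/2) / (P0 * (h^2 + r0))" unfolding P0_def by simp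
  also have "\<dots> \<le> (h^2/2) / DD h t m" using D Dp h by (intro divide_left_mono) auto
  also have "\<dots> \<le> (DD h t m + NK h t m * m) / DD h t m" using num Dp by (intro divide_right_mono) auto
  also have "\<dots> = 1 + K h t m * m" using tau_rhs[OF h] by simp
  finally show ?thesis .
qed

lemma step_a: "\<exists>s0\<ge>0. \<tau> s0 > 0"
proof (rule ccontr)
  assume "\<not> ?thesis"
  hence np: "\<And>s. s \<ge> 0 \<Longrightarrow> \<tau> s \<le> 0" by (meson not_le)
  define r0 where "r0 = rho 0"
  have rle: "rho s \<le> r0" if s: "s \<ge> 0" for s
  proof -
    have "(\<lambda>s. - rho s) 0 \<le> (\<lambda>s. - rho s) s"
      by (rule incr[where f'="\<lambda>s. - (2 * \<tau> s)", OF _ _ s]) (auto intro!: derivative_eq_intros drho np)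
    thus ?thesis unfolding r0_def by simp
  qed
  define \<delta> where "\<delta> = h^2 / (4 * (1 + r0)^2 * (1 + h^2))"
  define c where "c = h^2 / (2 * (1 + r0) * (h^2 + r0))"
  have r0: "r0 \<ge> 0" unfolding r0_def by (rule rho_nonneg)
  have \<delta>p: "\<delta> > 0" unfolding \<delta>_def using h r0 by (intro divide_pos_pos mult_pos_pos) (auto simp: add_pos_nonneg)
  have cp: "c > 0" unfolding c_def using h r0 by (intro divide_pos_pos mult_pos_pos) (auto simp: add_pos_nonneg)
  have key: "1 + K h (\<tau> s) (\<mu> s) * \<mu> s \<ge> c" if "s \<ge> 0" "\<tau> s \<ge> -\<delta>" for s
    unfolding c_def by (rule key_a) (use that np rle[OF that(1)] in \<open>auto simp: \<delta>_def rho_def\<close>)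
  show False
  proof (cases "\<exists>s1\<ge>0. \<tau> s1 > -\<delta>")
    case True
    then obtain s1 where s1: "s1 \<ge> 0" "\<tau> s1 > -\<delta>" by auto
    have stay: "\<tau> s > -\<delta>" if "s \<ge> s1" for s
    proof -
      have "(\<lambda>s. -\<delta> - \<tau> s) s < 0"
      proof (rule barrier[where g'="\<lambda>s. - (1 + K h (\<tau> s) (\<mu> s) * \<mu> s)", OF _ _ _ that])
        show "((\<lambda>s. -\<delta> - \<tau> s) has_real_derivative - (1 + K h (\<tau> t) (\<mu> t) * \<mu> t)) (at t)" for t
          by (auto intro!: derivative_eq_intros dt)
        show "-\<delta> - \<tau> s1 < 0" using s1 by simp
        show "- (1 + K h (\<tau> t) (\<mu> t) * \<mu> t) < 0" if "s1 \<le> t" "-\<delta> - \<tau> t = 0" for t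
          using key[of t] that s1 cp by auto
      qed
      thus ?thesis by simp
    qed
    define s2 where "s2 = s1 + (\<delta> + 1) / c"
    have s2: "s2 \<ge> s1" unfolding s2_def using \<delta>p cp by simp
    have "(\<lambda>s. \<tau> s - c * s) s1 \<le> (\<lambda>s. \<tau> s - c * s) s2"
    proof (rule incr[where f'="\<lambda>s. (1 + K h (\<tau> s) (\<mu> s) * \<mu> s) - c", OF _ _ s2])
      show "((\<lambda>s. \<tau> s - c * s) has_real_derivative (1 + K h (\<tau> t) (\<mu> t) * \<mu> t) - c) (at t)" for t
        by (auto intro!: derivative_eq_intros dt)
      show "(1 + K h (\<tau> t) (\<mu> t) * \<mu> t) - c \<ge> 0" if "s1 \<le> t" "t \<le> s2" for t
        using key[of t] stay[of t] that s1 by auto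
    qed
    hence "\<tau> s2 \<ge> \<tau> s1 + c * (s2 - s1)" by (simp add: algebra_simps)
    moreover have "c * (s2 - s1) = \<delta> + 1" unfolding s2_def using cp by simp
    ultimately have "\<tau> s2 > 0" using s1 by linarith
    thus False using np[of s2] s2 s1 by simp
  next
    case False
    hence le: "\<And>s. s \<ge> 0 \<Longrightarrow> \<tau> s \<le> -\<delta>" by (meson not_le)
    define s2 where "s2 = (r0 + 1) / (2 * \<delta>)"
    have s2: "s2 \<ge> 0" unfolding s2_def using r0 \<delta>p by simp
    have "(\<lambda>s. - rho s - 2 * \<delta> * s) 0 \<le> (\<lambda>s. - rho s - 2 * \<delta> * s) s2"
      by (rule incr[where f'="\<lambda>s. - (2 * \<tau> s) - 2 * \<delta>", OF _ _ s2])
         (auto intro!: derivative_eq_intros drho dest!: le)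
    hence "rho s2 \<le> r0 - 2 * \<delta> * s2" unfolding r0_def by simp
    moreover have "2 * \<delta> * s2 = r0 + 1" unfolding s2_def using \<delta>p by simp
    ultimately show False using rho_nonneg[of s2] by linarith
  qed
qed

lemma tau_stay:
  assumes s0: "\<tau> s0 > 0" and s: "s \<ge> s0"
  shows "\<tau> s > 0"
proof -
  have "(\<lambda>s. - \<tau> s) s < 0"
  proof (rule barrier[where g'="\<lambda>s. - (1 + K h (\<tau> s) (\<mu> s) * \<mu> s)", OF _ _ _ s])
    show "((\<lambda>s. - \<tau> s) has_real_derivative - (1 + K h (\<tau> t) (\<mu> t) * \<mu> t)) (at t)" for t
      by (auto intro!: derivative_eq_intros dt)
    show "- \<tau> s0 < 0" using s0 by simp
    show "- (1 + K h (\<tau> t) (\<mu> t) * \<mu> t) < 0" if "s0 \<le> t" "- \<tau> t = 0" for t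
      using K_t0[OF h, of "\<mu> t"] that by simp
  qed
  thus ?thesis by simp
qed

lemma rho_mono:
  assumes pos: "\<And>s. s \<ge> s0 \<Longrightarrow> \<tau> s > 0" and s: "s \<ge> s0"
  shows "rho s \<ge> rho s0"
  by (rule incr[where f'="\<lambda>s. 2 * \<tau> s", OF _ _ s]) (auto intro!: drho dest!: pos less_imp_le)

lemma dq:
  assumes "\<tau> s \<noteq> 0"
  shows "((\<lambda>s. \<mu> s / \<tau> s) has_real_derivative
     - (\<mu> s * DD h (\<tau> s) (\<mu> s) + NK h (\<tau> s) (\<mu> s) * ((\<tau> s)^2+(\<mu> s)^2)) / ((\<tau> s)^2 * DD h (\<tau> s) (\<mu> s))) (at s)"
proof -
  have "((\<lambda>s. \<mu> s / \<tau> s) has_real_derivative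
     ((-(K h (\<tau> s) (\<mu> s) * \<tau> s)) * \<tau> s - \<mu> s * (1 + K h (\<tau> s) (\<mu> s) * \<mu> s)) / (\<tau> s)^2) (at s)"
    using assms by (auto intro!: derivative_eq_intros dt dm simp: power2_eq_square)
  thus ?thesis using q_rhs[OF h assms] by simp
qed

lemma frac_bound:
  fixes P X Y C :: real
  assumes "X > 0" "Y > 0" "P * Y \<ge> C * X"
  shows "- P / X \<le> - C / Y"
  using assms by (simp add: divide_simps)

lemma step_b:
  assumes s0: "s0 \<ge> 0" and pos: "\<And>s. s \<ge> s0 \<Longrightarrow> \<tau> s > 0"
  shows "\<exists>s1\<ge>s0. \<mu> s1 < 0"
proof (rule ccontr)
  assume "\<not> ?thesis"
  hence nn: "\<And>s. s \<ge> s0 \<Longrightarrow> \<mu> s \<ge> 0" by (meson not_le)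
  define r0 where "r0 = rho s0"
  have r0: "r0 > 0" unfolding r0_def rho_def using pos[of s0] by (simp add: add_pos_nonneg)
  define ch where "ch = h^2 / (1 + h^2)"
  have ch: "ch > 0" "ch \<le> 1" "ch \<le> h^2" unfolding ch_def using h
    by (auto simp: field_simps add_pos_nonneg)
  define C where "C = 2 * ch * r0 / ((1 + r0) * L)"
  have Cp: "C > 0" unfolding C_def using ch r0 L by simp
  define q where "q = (\<lambda>s. \<mu> s / \<tau> s)"
  have qd: "(q has_real_derivative - (\<mu> s * DD h (\<tau> s) (\<mu> s) + NK h (\<tau> s) (\<mu> s) * ((\<tau> s)^2+(\<mu> s)^2)) / ((\<tau> s)^2 * DD h (\<tau> s) (\<mu> s))) (at s)"
    if "s \<ge> s0" for s unfolding q_def using dq pos[OF that] by simp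
  have qb: "- (\<mu> s * DD h (\<tau> s) (\<mu> s) + NK h (\<tau> s) (\<mu> s) * ((\<tau> s)^2+(\<mu> s)^2)) / ((\<tau> s)^2 * DD h (\<tau> s) (\<mu> s)) \<le> - C / (B + s)"
    if s: "s \<ge> s0" for s
  proof -
    define t where "t = \<tau> s"
    define m where "m = \<mu> s"
    define \<rho> where "\<rho> = t^2 + m^2"
    have t: "t > 0" unfolding t_def using pos[OF s] .
    have m: "m \<ge> 0" unfolding m_def using nn[OF s] .
    have \<rho>: "\<rho> \<ge> r0" using rho_mono[OF pos s] unfolding \<rho>_def t_def m_def r0_def rho_def by simp
    have tL: "t \<le> L * (B + s)" using bt[of s] s s0 t unfolding t_def by simp
    define P where "P = h^2*m + 2*h^2*\<rho>*(m+t) + \<rho>*(m+2*t)*(t^2+h^2*m^2)"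
    have P1: "P \<ge> 2*\<rho>*t*(h^2 + t^2 + h^2*m^2)"
    proof -
      have a: "h^2*m \<ge> 0" using m by simp
      have b: "2*h^2*\<rho>*(m+t) \<ge> 2*h^2*\<rho>*t" using m \<rho> r0 by (intro mult_left_mono) auto
      have c: "\<rho>*(m+2*t)*(t^2+h^2*m^2) \<ge> \<rho>*(2*t)*(t^2+h^2*m^2)" using m \<rho> r0
        by (intro mult_right_mono mult_left_mono) auto
      show ?thesis unfolding P_def using a b c by (simp add: algebra_simps)
    qed
    have P2: "h^2 + t^2 + h^2*m^2 \<ge> ch * (h^2 + \<rho>)"
    proof -
      have "ch * h^2 \<le> h^2" using ch by (simp add: mult_left_le_one_le)
      moreover have "ch * t^2 \<le> t^2" using ch by (simp add: mult_left_le_one_le)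
      moreover have "ch * m^2 \<le> h^2 * m^2" using ch by (simp add: mult_right_mono)
      ultimately show ?thesis unfolding \<rho>_def by (simp add: algebra_simps)
    qed
    have P3: "P \<ge> 2*ch*\<rho>*t*(h^2+\<rho>)"
    proof -
      have "2*\<rho>*t*(h^2 + t^2 + h^2*m^2) \<ge> 2*\<rho>*t*(ch * (h^2 + \<rho>))"
        using P2 t \<rho> r0 by (intro mult_left_mono) auto
      thus ?thesis using P1 by (simp add: algebra_simps)
    qed
    have Dp: "DD h t m > 0" using DD_pos[OF h] .
    have DDe: "DD h t m = (1 + \<rho>) * (h^2 + \<rho>)" unfolding DD_def \<rho>_def ..
    have main: "P * (B + s) \<ge> C * (t^2 * DD h t m)"
    proof -
      have hr: "h^2 + \<rho> > 0" using h \<rho> r0 by (simp add: add_pos_pos)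
      have "C * (t^2 * DD h t m) = (2 * ch * t^2 * (h^2 + \<rho>) / L) * (r0 * (1 + \<rho>) / (1 + r0))"
        unfolding C_def DDe by (simp add: field_simps)
      also have "\<dots> \<le> (2 * ch * t^2 * (h^2 + \<rho>) / L) * \<rho>"
      proof (rule mult_left_mono)
        show "r0 * (1 + \<rho>) / (1 + r0) \<le> \<rho>" using r0 \<rho> by (simp add: divide_simps algebra_simps)
        show "0 \<le> 2 * ch * t^2 * (h^2 + \<rho>) / L" using ch hr L by simp
      qed
      also have "\<dots> = (2 * ch * \<rho> * t * (h^2 + \<rho>)) * (t / L)" by (simp add: field_simps power2_eq_square)
      also have "\<dots> \<le> (2 * ch * \<rho> * t * (h^2 + \<rho>)) * (B + s)"
        using tL L ch t \<rho> r0 hr by (intro mult_left_mono) (auto simp: divide_simps mult.commute)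
      also have "\<dots> \<le> P * (B + s)" using P3 B s s0 by (intro mult_right_mono) auto
      finally show ?thesis .
    qed
    have "P = m * DD h t m + NK h t m * (t^2+m^2)" unfolding P_def \<rho>_def by (rule P_id[symmetric])
    hence "- (m * DD h t m + NK h t m * (t^2+m^2)) / (t^2 * DD h t m) \<le> - C / (B + s)"
      using frac_bound[OF _ _ main] Dp t B s s0 by simp
    thus ?thesis unfolding t_def m_def .
  qed
  obtain s where s: "s \<ge> s0" "B + s > 0" "C * ln (B + s) > q s0 + C * ln (B + s0)"
    using ln_big[OF Cp] by blast
  have "q s \<le> q s0 + C * ln (B + s0) - C * ln (B + s)"
    by (rule log_bound[OF Cp _ qd qb s(1)]) (use B s0 in auto)
  hence "q s < 0" using s by linarith
  moreover have "q s \<ge> 0" unfolding q_def using nn[OF s(1)] pos[OF s(1)] by simp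
  ultimately show False by simp
qed

lemma mu_stay:
  assumes pos: "\<And>s. s \<ge> s0 \<Longrightarrow> \<tau> s > 0" and s1: "s1 \<ge> s0" "\<mu> s1 < 0" and s: "s \<ge> s1"
  shows "\<mu> s < 0"
proof (rule barrier[where g'="\<lambda>s. -(K h (\<tau> s) (\<mu> s) * \<tau> s)", OF _ _ _ s])
  show "(\<mu> has_real_derivative -(K h (\<tau> t) (\<mu> t) * \<tau> t)) (at t)" for t by (rule dm)
  show "\<mu> s1 < 0" by (rule s1)
  show "-(K h (\<tau> t) (\<mu> t) * \<tau> t) < 0" if "s1 \<le> t" "\<mu> t = 0" for t
    using K_m0[OF h pos[of t]] that s1 by simp
qed

lemma step_c:
  assumes s1: "s1 \<ge> 0" and pos: "\<And>s. s \<ge> s1 \<Longrightarrow> \<tau> s > 0"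
    and neg: "\<And>s. s \<ge> s1 \<Longrightarrow> \<mu> s < 0"
  shows "\<exists>s2\<ge>s1. \<exists>\<beta>>0. \<forall>s\<ge>s2. \<mu> s < - \<beta> * \<tau> s"
proof -
  define r1 where "r1 = rho s1"
  have r1: "r1 > 0" unfolding r1_def rho_def using pos[of s1] by (simp add: add_pos_nonneg)
  define \<beta> where "\<beta> = min (1/2) r1"
  have \<beta>: "\<beta> > 0" "\<beta> \<le> 1/2" "\<beta> \<le> r1" unfolding \<beta>_def using r1 by auto
  define c2 where "c2 = min (1/4) (r1 / (4 * h^2))"
  have c2: "c2 > 0" "c2 \<le> 1/4" "c2 * h^2 \<le> r1 / 4" unfolding c2_def using r1 h
    by (auto simp: min_def field_simps)
  define C where "C = 3 / 2 * r1 * c2 / ((1 + r1) * L)"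
  have Cp: "C > 0" unfolding C_def using r1 c2 L by simp
  define q where "q = (\<lambda>s. \<mu> s / \<tau> s)"
  have qd: "(q has_real_derivative - (\<mu> s * DD h (\<tau> s) (\<mu> s) + NK h (\<tau> s) (\<mu> s) * ((\<tau> s)^2+(\<mu> s)^2)) / ((\<tau> s)^2 * DD h (\<tau> s) (\<mu> s))) (at s)"
    if "s \<ge> s1" for s unfolding q_def using dq pos[OF that] by simp
  have qb: "- (\<mu> s * DD h (\<tau> s) (\<mu> s) + NK h (\<tau> s) (\<mu> s) * ((\<tau> s)^2+(\<mu> s)^2)) / ((\<tau> s)^2 * DD h (\<tau> s) (\<mu> s)) \<le> - C / (B + s)"
    if s: "s \<ge> s1" and qs: "q s \<ge> -\<beta>" for s
  proof -
    define t where "t = \<tau> s"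
    define m where "m = \<mu> s"
    define \<rho> where "\<rho> = t^2 + m^2"
    have t: "t > 0" unfolding t_def using pos[OF s] .
    have m: "m < 0" unfolding m_def using neg[OF s] .
    have mb: "m \<ge> -\<beta> * t" using qs t unfolding q_def t_def m_def by (simp add: divide_simps)
    have \<rho>: "\<rho> \<ge> r1" using rho_mono[OF pos s] unfolding \<rho>_def t_def m_def r1_def rho_def by simp
    have tL: "t \<le> L * (B + s)" using bt[of s] s s1 t unfolding t_def by simp
    have mt: "m^2 \<le> t^2"
    proof -
      have "\<beta> * t \<le> 1 * t" using \<beta> t by (intro mult_right_mono) auto
      hence "-m \<le> t" using mb by linarith
      hence "(-m)^2 \<le> t^2" using m by (intro power_mono) auto
      thus ?thesis by simp
    qed
    define P where "P = h^2*m + 2*h^2*\<rho>*(m+t) + \<rho>*(m+2*t)*(t^2+h^2*m^2)"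
    have P1: "P \<ge> 3/2*\<rho>*t^3"
    proof -
      have bt': "\<beta> * t \<le> t/2" using \<beta> t by simp
      have a0: "h^2 * (-\<beta>*t) \<le> h^2 * m" by (rule mult_left_mono[OF mb]) simp
      have a: "h^2*m \<ge> -(h^2*(\<beta>*t))" using a0 by simp
      have "2*h^2*\<rho>*(m+t) \<ge> 2*h^2*\<rho>*(t/2)" using mb bt' \<rho> r1 by (intro mult_left_mono) auto
      moreover have "2*h^2*\<rho>*(t/2) \<ge> h^2*(\<beta>*t)"
      proof -
        have "\<beta>*t \<le> \<rho>*t" using \<beta> \<rho> t by simp
        thus ?thesis by (simp add: mult_left_mono)
      qed
      ultimately have b: "2*h^2*\<rho>*(m+t) \<ge> h^2*(\<beta>*t)" by linarith
      have \<rho>0: "\<rho> \<ge> 0" using \<rho> r1 by simp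
      have e1: "3/2*t \<le> m + 2*t" using mb bt' by linarith
      have e3: "\<rho>*(3/2*t) \<le> \<rho>*(m+2*t)" using e1 \<rho>0 by (rule mult_left_mono)
      have e4: "\<rho>*(3/2*t)*(t^2) \<le> \<rho>*(m+2*t)*(t^2)" using e3 by (rule mult_right_mono) simp
      have "0 \<le> m+2*t" using e1 t by linarith
      hence "0 \<le> \<rho>*(m+2*t)" using \<rho>0 by simp
      hence e5: "\<rho>*(m+2*t)*(t^2) \<le> \<rho>*(m+2*t)*(t^2+h^2*m^2)" by (rule mult_left_mono[rotated]) simp
      have c: "\<rho>*(m+2*t)*(t^2+h^2*m^2) \<ge> \<rho>*(3/2*t)*(t^2)" using e4 e5 by linarith
      have "\<rho>*(3/2*t)*(t^2) = 3/2*\<rho>*t^3" by (simp add: power3_eq_cube power2_eq_square)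
      thus ?thesis unfolding P_def using a b c by linarith
    qed
    have Dp: "DD h t m > 0" using DD_pos[OF h] .
    have DDe: "DD h t m = (1 + \<rho>) * (h^2 + \<rho>)" unfolding DD_def \<rho>_def ..
    have F1: "c2 * (h^2 + \<rho>) \<le> t * (L * (B + s))"
    proof -
      have "t^2 \<ge> \<rho>/2" using mt unfolding \<rho>_def by simp
      hence "t^2 \<ge> r1/2" using \<rho> by simp
      have tt: "t^2 \<le> t * (L * (B + s))" using tL t by (simp add: power2_eq_square)
      have "c2 * \<rho> \<le> \<rho> / 4" using c2 \<rho> r1 by (simp add: mult_right_mono)
      moreover have "\<rho> / 4 \<le> t^2 / 2" using mt unfolding \<rho>_def by simp
      moreover have "c2 * h^2 \<le> t^2 / 2" using c2 \<open>t^2 \<ge> r1/2\<close> by simp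
      ultimately show ?thesis using tt by (simp add: algebra_simps)
    qed
    have F2: "(1 + \<rho>) * r1 \<le> \<rho> * (1 + r1)" using \<rho> by (simp add: algebra_simps)
    have main: "P * (B + s) \<ge> C * (t^2 * DD h t m)"
    proof -
      have "C * (t^2 * DD h t m) = (3/2 * t^2 / ((1 + r1) * L)) * ((1 + \<rho>) * r1) * (c2 * (h^2 + \<rho>))"
        unfolding C_def DDe by (simp add: field_simps)
      also have "\<dots> \<le> (3/2 * t^2 / ((1 + r1) * L)) * (\<rho> * (1 + r1)) * (c2 * (h^2 + \<rho>))"
      proof (rule mult_right_mono)
        have "0 \<le> 3/2 * t^2 / ((1 + r1) * L)" using r1 L by simp
        thus "(3/2 * t^2 / ((1 + r1) * L)) * ((1 + \<rho>) * r1) \<le> (3/2 * t^2 / ((1 + r1) * L)) * (\<rho> * (1 + r1))"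
          by (rule mult_left_mono[OF F2])
        show "0 \<le> c2 * (h^2 + \<rho>)" using c2 \<rho> r1 by simp
      qed
      also have "\<dots> \<le> (3/2 * t^2 / ((1 + r1) * L)) * (\<rho> * (1 + r1)) * (t * (L * (B + s)))"
      proof (rule mult_left_mono[OF F1])
        show "0 \<le> (3/2 * t^2 / ((1 + r1) * L)) * (\<rho> * (1 + r1))" using r1 L \<rho> by simp
      qed
      also have "\<dots> = 3/2*\<rho>*t^3 * (B + s)"
      proof -
        have nz: "(1 + r1) * L \<noteq> 0" using r1 L by auto
        have e0: "(3/2 * t^2 / ((1 + r1) * L)) * (\<rho> * (1 + r1)) * (t * (L * (B + s)))
             = (3/2 * t^2 * (\<rho> * (1 + r1)) * (t * (L * (B + s)))) / ((1 + r1) * L)" by simp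
        have e: "3/2 * t^2 * (\<rho> * (1 + r1)) * (t * (L * (B + s))) = (3/2*\<rho>*t^3 * (B + s)) * ((1 + r1) * L)"
          by (simp add: algebra_simps power3_eq_cube power2_eq_square)
        show ?thesis unfolding e0 e using nz by simp
      qed
      also have "\<dots> \<le> P * (B + s)" using P1 B s s1 by (intro mult_right_mono) auto
      finally show ?thesis .
    qed
    have "P = m * DD h t m + NK h t m * (t^2+m^2)" unfolding P_def \<rho>_def by (rule P_id[symmetric])
    hence "- (m * DD h t m + NK h t m * (t^2+m^2)) / (t^2 * DD h t m) \<le> - C / (B + s)"
      using frac_bound[OF _ _ main] Dp t B s s1 by simp
    thus ?thesis unfolding t_def m_def .
  qed
  have "\<exists>s2\<ge>s1. q s2 < -\<beta>"
  proof (rule ccontr)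
    assume "\<not> ?thesis"
    hence ge: "\<And>s. s \<ge> s1 \<Longrightarrow> q s \<ge> -\<beta>" by (meson not_le)
    obtain s where s: "s \<ge> s1" "B + s > 0" "C * ln (B + s) > q s1 + C * ln (B + s1) + \<beta>"
      using ln_big[OF Cp] by blast
    have "q s \<le> q s1 + C * ln (B + s1) - C * ln (B + s)"
      by (rule log_bound[OF Cp _ qd qb s(1)]) (use B s1 ge in auto)
    thus False using s ge[OF s(1)] by linarith
  qed
  then obtain s2 where s2: "s2 \<ge> s1" "q s2 < -\<beta>" by blast
  have "\<mu> s < - \<beta> * \<tau> s" if s: "s \<ge> s2" for s
  proof -
    have "(\<lambda>s. q s + \<beta>) s < 0"
    proof (rule barrier[where g'="\<lambda>s. - (\<mu> s * DD h (\<tau> s) (\<mu> s) + NK h (\<tau> s) (\<mu> s) * ((\<tau> s)^2+(\<mu> s)^2)) / ((\<tau> s)^2 * DD h (\<tau> s) (\<mu> s))", OF _ _ _ s])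
      show "((\<lambda>s. q s + \<beta>) has_real_derivative - (\<mu> t * DD h (\<tau> t) (\<mu> t) + NK h (\<tau> t) (\<mu> t) * ((\<tau> t)^2+(\<mu> t)^2)) / ((\<tau> t)^2 * DD h (\<tau> t) (\<mu> t))) (at t)" if "s2 \<le> t" for t
        using qd[of t] that s2 by (auto intro!: derivative_eq_intros)
      show "q s2 + \<beta> < 0" using s2 by simp
      show "- (\<mu> t * DD h (\<tau> t) (\<mu> t) + NK h (\<tau> t) (\<mu> t) * ((\<tau> t)^2+(\<mu> t)^2)) / ((\<tau> t)^2 * DD h (\<tau> t) (\<mu> t)) < 0"
        if "s2 \<le> t" "q t + \<beta> = 0" for t
      proof -
        have "- C / (B + t) < 0" using Cp B that s2 s1 by simp
        thus ?thesis using qb[of t] that s2 by simp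
      qed
    qed
    hence "\<mu> s / \<tau> s < - \<beta>" unfolding q_def by simp
    thus ?thesis using pos[of s] s s2 by (simp add: divide_simps)
  qed
  thus ?thesis using s2 \<beta> by blast
qed

lemma forward: "\<exists>S\<ge>0. \<exists>c>0. \<forall>s\<ge>S. \<tau> s > 0 \<and> c / (B + s) \<le> - \<mu> s / ((\<tau> s)^2 + (\<mu> s)^2)"
proof -
  obtain s0 where s0: "s0 \<ge> 0" "\<tau> s0 > 0" using step_a by blast
  have pos: "\<And>s. s \<ge> s0 \<Longrightarrow> \<tau> s > 0" using tau_stay s0 by blast
  obtain s1 where s1: "s1 \<ge> s0" "\<mu> s1 < 0" using step_b[OF s0(1) pos] by blast
  have neg: "\<And>s. s \<ge> s1 \<Longrightarrow> \<mu> s < 0" using mu_stay[OF pos s1] by blast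
  have pos1: "\<And>s. s \<ge> s1 \<Longrightarrow> \<tau> s > 0" using pos s1 by simp
  have "\<exists>s2\<ge>s1. \<exists>\<beta>>0. \<forall>s\<ge>s2. \<mu> s < - \<beta> * \<tau> s"
    by (rule step_c) (use s1 s0 pos1 neg in auto)
  then obtain s2 \<beta> where s2: "s2 \<ge> s1" "\<beta> > 0" "\<And>s. s \<ge> s2 \<Longrightarrow> \<mu> s < - \<beta> * \<tau> s"
    by blast
  define c where "c = \<beta>^2 / ((1 + \<beta>^2) * L)"
  have cp: "c > 0" unfolding c_def using s2(2) L by (simp add: add_pos_nonneg)
  have "\<tau> s > 0 \<and> c / (B + s) \<le> - \<mu> s / ((\<tau> s)^2 + (\<mu> s)^2)" if s: "s \<ge> s2" for s
  proof
    define t where "t = \<tau> s"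
    define m where "m = \<mu> s"
    show t: "\<tau> s > 0" using pos1[of s] s s2 by simp
    have mt: "\<beta> * t < - m" using s2(3)[OF s] unfolding t_def m_def by simp
    have bt0: "0 < \<beta> * t" using t s2(2) unfolding t_def by simp
    have "(\<beta> * t)^2 \<le> (-m)^2" using mt bt0 by (intro power_mono) auto
    hence b1: "\<beta>^2 * t^2 \<le> m^2" by (simp add: power_mult_distrib)
    have b2: "\<beta>^2 * (t^2 + m^2) \<le> (1 + \<beta>^2) * m^2" using b1 by (simp add: algebra_simps)
    have mL: "-m \<le> L * (B + s)" using bm[of s] s s2 s1 s0 unfolding m_def by simp
    have m0: "0 \<le> -m" using mt bt0 by linarith
    have "(-m) * (-m) \<le> (-m) * (L * (B + s))" by (rule mult_left_mono[OF mL m0])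
    hence b3: "m^2 \<le> (-m) * (L * (B + s))" by (simp add: power2_eq_square)
    have key: "c * (t^2 + m^2) \<le> (-m) * (B + s)"
    proof -
      have "c * (t^2 + m^2) = (\<beta>^2 * (t^2 + m^2)) / ((1 + \<beta>^2) * L)" unfolding c_def by simp
      also have "\<dots> \<le> ((1 + \<beta>^2) * m^2) / ((1 + \<beta>^2) * L)" using b2 L by (intro divide_right_mono) (auto simp: add_pos_nonneg)
      also have "\<dots> = m^2 / L"
      proof -
        have "1 + \<beta>^2 \<noteq> 0" by (smt (verit) zero_le_power2)
        thus ?thesis by simp
      qed
      also have "\<dots> \<le> (-m) * (L * (B + s)) / L" using b3 L by (intro divide_right_mono) auto
      also have "\<dots> = (-m) * (B + s)" using L by simp
      finally show ?thesis .
    qed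
    have rp: "t^2 + m^2 > 0" using t unfolding t_def by (simp add: add_pos_nonneg)
    have Bs: "B + s > 0" using B s s2 s1 s0 by simp
    have "c / (B + s) \<le> - m / (t^2 + m^2)" using key rp Bs by (simp add: divide_simps mult.commute)
    thus "c / (B + s) \<le> - \<mu> s / ((\<tau> s)^2 + (\<mu> s)^2)" unfolding t_def m_def .
  qed
  thus ?thesis using s2 s1 s0 cp by (intro exI[of _ s2]) auto
qed

end



lemma omega_deriv:
  fixes x y \<omega> r :: "real \<Rightarrow> real"
  assumes U: "open U" "s0 \<in> U" and cont: "isCont \<omega> s0"
    and rep: "\<And>s. s \<in> U \<Longrightarrow> x s = r s * cos (\<omega> s) \<and> y s = r s * sin (\<omega> s)"
    and rpos: "\<And>s. s \<in> U \<Longrightarrow> r s > 0"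
    and dx: "(x has_real_derivative p0) (at s0)" and dy: "(y has_real_derivative q0) (at s0)"
  shows "(\<omega> has_real_derivative (x s0 * q0 - y s0 * p0) / ((x s0)^2 + (y s0)^2)) (at s0)"
proof -
  define w0 where "w0 = \<omega> s0"
  define a where "a = (\<lambda>s. x s * cos w0 + y s * sin w0)"
  define b where "b = (\<lambda>s. - x s * sin w0 + y s * cos w0)"
  obtain d where d: "d > 0" "\<And>s. dist s s0 < d \<Longrightarrow> dist (\<omega> s) (\<omega> s0) < pi/2"
    using cont unfolding isCont_def tendsto_iff
    by (metis (mono_tags, lifting) continuous_at_eps_delta cont pi_half_gt_zero)
  obtain e where e: "e > 0" "ball s0 e \<subseteq> U" using U open_contains_ball by blast
  define V where "V = ball s0 (min d e)"
  have V: "open V" "s0 \<in> V" unfolding V_def using d e by auto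
  have eq: "w0 + arctan (b s / a s) = \<omega> s" if s: "s \<in> V" for s
  proof -
    have sU: "s \<in> U" using s e unfolding V_def by auto
    have "dist s s0 < d" using s unfolding V_def by (simp add: dist_commute)
    hence wa: "\<bar>\<omega> s - w0\<bar> < pi/2" using d(2)[of s] unfolding w0_def dist_real_def by simp
    have w: "-(pi/2) < \<omega> s - w0" "\<omega> s - w0 < pi/2" using wa by (metis abs_less_iff minus_less_iff)+
    have ae: "a s = r s * cos (\<omega> s - w0)" unfolding a_def using rep[OF sU] by (simp add: cos_diff algebra_simps)
    have be: "b s = r s * sin (\<omega> s - w0)" unfolding b_def using rep[OF sU] by (simp add: sin_diff algebra_simps)
    have "cos (\<omega> s - w0) > 0" using cos_gt_zero_pi[OF w] .
    hence "b s / a s = tan (\<omega> s - w0)" unfolding ae be tan_def using rpos[OF sU] by simp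
    thus ?thesis using arctan_tan[OF w] by simp
  qed
  have r0: "r s0 > 0" using rpos U by simp
  have a0: "a s0 = r s0"
  proof -
    have xy: "x s0 = r s0 * cos w0" "y s0 = r s0 * sin w0" using rep[OF U(2)] unfolding w0_def by auto
    have "a s0 = r s0 * (cos w0 * cos w0) + r s0 * (sin w0 * sin w0)" unfolding a_def xy by (simp add: algebra_simps)
    thus ?thesis by (metis distrib_left mult.right_neutral sin_cos_squared_add3)
  qed
  have b0: "b s0 = 0" unfolding b_def using rep[OF U(2)] unfolding w0_def by (simp add: algebra_simps)
  have da: "(a has_real_derivative (p0 * cos w0 + q0 * sin w0)) (at s0)" unfolding a_def
    by (auto intro!: derivative_eq_intros dx dy)
  have db: "(b has_real_derivative (- p0 * sin w0 + q0 * cos w0)) (at s0)" unfolding b_def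
    by (auto intro!: derivative_eq_intros dx dy)
  have "((\<lambda>s. w0 + arctan (b s / a s)) has_real_derivative
      inverse (1 + (b s0 / a s0)^2) * (((- p0 * sin w0 + q0 * cos w0) * a s0 - b s0 * (p0 * cos w0 + q0 * sin w0)) / (a s0 * a s0))) (at s0)"
    using r0 a0 by (auto intro!: derivative_eq_intros da db DERIV_arctan[THEN DERIV_chain2])
  moreover have "inverse (1 + (b s0 / a s0)^2) * (((- p0 * sin w0 + q0 * cos w0) * a s0 - b s0 * (p0 * cos w0 + q0 * sin w0)) / (a s0 * a s0))
      = (x s0 * q0 - y s0 * p0) / ((x s0)^2 + (y s0)^2)"
  proof -
    have xy: "x s0 = r s0 * cos w0" "y s0 = r s0 * sin w0" using rep[OF U(2)] unfolding w0_def by auto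
    have "(x s0)^2 + (y s0)^2 = (r s0)^2" 
    proof -
      have e: "((cos w0)^2 + (sin w0)^2) * (r s0)^2 = (r s0)^2" by simp
      have "(cos w0)^2 * (r s0)^2 + (sin w0)^2 * (r s0)^2 = (r s0)^2" using e by (metis distrib_right)
      thus ?thesis unfolding xy by (simp add: power_mult_distrib mult.commute)
    qed
    hence "(x s0 * q0 - y s0 * p0) / ((x s0)^2 + (y s0)^2) = r s0 * (q0 * cos w0 - p0 * sin w0) / (r s0)^2"
      unfolding xy by (simp add: algebra_simps)
    also have "\<dots> = (q0 * cos w0 - p0 * sin w0) / r s0" using r0 by (simp add: power2_eq_square)
    finally have T: "(x s0 * q0 - y s0 * p0) / ((x s0)^2 + (y s0)^2) = (q0 * cos w0 - p0 * sin w0) / r s0" .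
    have "inverse (1 + (b s0 / a s0)^2) * (((- p0 * sin w0 + q0 * cos w0) * a s0 - b s0 * (p0 * cos w0 + q0 * sin w0)) / (a s0 * a s0))
        = ((q0 * cos w0 - p0 * sin w0) * r s0) / (r s0 * r s0)" unfolding a0 b0 by (simp add: algebra_simps)
    also have "\<dots> = (q0 * cos w0 - p0 * sin w0) / r s0" using r0 by simp
    finally show ?thesis using T by simp
  qed
  ultimately have "((\<lambda>s. w0 + arctan (b s / a s)) has_real_derivative (x s0 * q0 - y s0 * p0) / ((x s0)^2 + (y s0)^2)) (at s0)"
    by simp
  thus ?thesis by (rule has_field_derivative_transform_within_open[OF _ V]) (use eq in auto)
qed

lemma lip_bound:
  fixes f f' :: "real \<Rightarrow> real"
  assumes d: "\<And>s. (f has_real_derivative f' s) (at s)" and b: "\<And>s. \<bar>f' s\<bar> \<le> 1"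
  shows "\<bar>f s\<bar> \<le> \<bar>f 0\<bar> + \<bar>s\<bar>"
proof -
  have b1: "f' t \<le> 1" "-1 \<le> f' t" "0 \<le> f' t + 1" "0 \<le> 1 + f' t" "0 \<le> 1 - f' t" for t using b[of t] by auto
  have "\<bar>f s - f 0\<bar> \<le> \<bar>s\<bar>"
  proof (cases "s \<ge> 0")
    case True
    have "(\<lambda>t. t - f t) 0 \<le> (\<lambda>t. t - f t) s"
      by (rule incr[where f'="\<lambda>t. 1 - f' t", OF _ _ True]) (auto intro!: derivative_eq_intros d simp: b1)
    moreover have "(\<lambda>t. t + f t) 0 \<le> (\<lambda>t. t + f t) s"
      by (rule incr[where f'="\<lambda>t. 1 + f' t", OF _ _ True]) (auto intro!: derivative_eq_intros d simp: b1)
    ultimately show ?thesis using True by auto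
  next
    case False
    hence F: "s \<le> 0" by simp
    have "(\<lambda>t. t - f t) s \<le> (\<lambda>t. t - f t) 0"
      by (rule incr[where f'="\<lambda>t. 1 - f' t", OF _ _ F]) (auto intro!: derivative_eq_intros d simp: b1)
    moreover have "(\<lambda>t. t + f t) s \<le> (\<lambda>t. t + f t) 0"
      by (rule incr[where f'="\<lambda>t. 1 + f' t", OF _ _ F]) (auto intro!: derivative_eq_intros d simp: b1)
    ultimately show ?thesis using F by auto
  qed
  thus ?thesis by linarith
qed

lemma grow:
  fixes f f' :: "real \<Rightarrow> real"
  assumes c: "c > 0" and B: "B > 0" and S: "S \<ge> 0"
    and d: "\<And>s. s > S \<Longrightarrow> (f has_real_derivative f' s) (at s)"
    and g: "\<And>s. s > S \<Longrightarrow> c / (B + s) \<le> f' s"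
  shows "\<exists>N. \<forall>s\<ge>N. Z \<le> f s"
proof -
  define s0 where "s0 = S + 1"
  have lb: "- f s \<le> - f s0 + c * ln (B + s0) - c * ln (B + s)" if "s \<ge> s0" for s
  proof (rule log_bound[OF c _ _ _ that])
    show "B + s0 > 0" using B S unfolding s0_def by simp
    show "((\<lambda>s. - f s) has_real_derivative - f' t) (at t)" if "t \<ge> s0" for t
      using d[of t] that unfolding s0_def by (auto intro!: derivative_eq_intros)
    show "- f' t \<le> - c / (B + t)" if "t \<ge> s0" for t using g[of t] that unfolding s0_def by simp
  qed
  obtain N where N: "N \<ge> s0" "B + N > 0" "c * ln (B + N) > Z - f s0 + c * ln (B + s0)"
    using ln_big[OF c] by blast
  have "Z \<le> f s" if s: "s \<ge> N" for s
  proof -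
    have "ln (B + N) \<le> ln (B + s)" using s N by simp
    hence "c * ln (B + N) \<le> c * ln (B + s)" using c by simp
    thus ?thesis using lb[of s] s N by linarith
  qed
  thus ?thesis by blast
qed




lemma comp_deriv:
  assumes "(\<alpha> has_vector_derivative v) (at s)"
  shows "((\<lambda>s. fst (\<alpha> s)) has_real_derivative fst v) (at s)"
    "((\<lambda>s. snd (\<alpha> s)) has_real_derivative snd v) (at s)"
proof -
  have d: "(\<alpha> has_derivative (\<lambda>x. x *\<^sub>R v)) (at s)" using assms by (simp add: has_vector_derivative_def)
  have "((\<lambda>s. fst (\<alpha> s)) has_derivative (\<lambda>x. fst (x *\<^sub>R v))) (at s)"
    by (rule has_derivative_fst[OF d])
  then show "((\<lambda>s. fst (\<alpha> s)) has_real_derivative fst v) (at s)"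
    by (simp add: has_field_derivative_def mult_commute_abs)
  have "((\<lambda>s. snd (\<alpha> s)) has_derivative (\<lambda>x. snd (x *\<^sub>R v))) (at s)"
    by (rule has_derivative_snd[OF d])
  then show "((\<lambda>s. snd (\<alpha> s)) has_real_derivative snd v) (at s)"
    by (simp add: has_field_derivative_def mult_commute_abs)
qed

theorem claim8:
  fixes h :: real
    and \<alpha> \<alpha>' \<alpha>'' :: "real \<Rightarrow> real \<times> real"
  assumes h: "h > 0"
    and d1: "\<And>s. (\<alpha> has_vector_derivative \<alpha>' s) (at s)"
    and d2: "\<And>s. (\<alpha>' has_vector_derivative \<alpha>'' s) (at s)"
    and unit: "\<And>s. norm (\<alpha>' s) = 1"
    and curv: "\<And>s. \<alpha>'' s \<bullet> J (\<alpha>' s) = K h (\<alpha> s \<bullet> \<alpha>' s) (\<alpha> s \<bullet> J (\<alpha>' s))"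
  shows "\<exists>S. (\<forall>s. \<bar>s\<bar> \<ge> S \<longrightarrow> \<alpha> s \<noteq> 0)
           \<and> (\<forall>\<omega>. continuous_on {S..} \<omega>
                  \<and> (\<forall>s\<ge>S. \<alpha> s = norm (\<alpha> s) *\<^sub>R (cos (\<omega> s), sin (\<omega> s)))
                  \<longrightarrow> filterlim \<omega> at_top at_top)
           \<and> (\<forall>\<omega>. continuous_on {..-S} \<omega>
                  \<and> (\<forall>s\<le>-S. \<alpha> s = norm (\<alpha> s) *\<^sub>R (cos (\<omega> s), sin (\<omega> s)))
                  \<longrightarrow> filterlim \<omega> at_top at_bot)"
proof -
  define x where "x = (\<lambda>s. fst (\<alpha> s))"
  define y where "y = (\<lambda>s. snd (\<alpha> s))"
  define p where "p = (\<lambda>s. fst (\<alpha>' s))"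
  define q where "q = (\<lambda>s. snd (\<alpha>' s))"
  define p2 where "p2 = (\<lambda>s. fst (\<alpha>'' s))"
  define q2 where "q2 = (\<lambda>s. snd (\<alpha>'' s))"
  have dx: "(x has_real_derivative p s) (at s)" for s unfolding x_def p_def by (rule comp_deriv(1)[OF d1])
  have dy: "(y has_real_derivative q s) (at s)" for s unfolding y_def q_def by (rule comp_deriv(2)[OF d1])
  have dp: "(p has_real_derivative p2 s) (at s)" for s unfolding p_def p2_def by (rule comp_deriv(1)[OF d2])
  have dq: "(q has_real_derivative q2 s) (at s)" for s unfolding q_def q2_def by (rule comp_deriv(2)[OF d2])
  have u: "(p s)^2 + (q s)^2 = 1" for s
  proof -
    have "norm (p s, q s) = 1" using unit[of s] unfolding p_def q_def by simp
    hence "sqrt ((p s)^2 + (q s)^2) = 1" by (simp add: norm_Pair)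
    thus ?thesis by simp
  qed
  have o: "p s * p2 s + q s * q2 s = 0" for s
  proof -
    have d: "((\<lambda>s. p s * p s + q s * q s) has_real_derivative (p2 s * p s + p2 s * p s + (q2 s * q s + q2 s * q s))) (at s)"
      by (intro DERIV_add DERIV_mult dp dq)
    have "(\<lambda>s. p s * p s + q s * q s) = (\<lambda>s. 1)" using u by (simp add: power2_eq_square)
    hence "((\<lambda>s. p s * p s + q s * q s) has_real_derivative 0) (at s)" by simp
    hence "p2 s * p s + p2 s * p s + (q2 s * q s + q2 s * q s) = 0" using d DERIV_unique by blast
    thus ?thesis by (simp add: algebra_simps)
  qed
  define T where "T = (\<lambda>s. \<alpha> s \<bullet> \<alpha>' s)"
  define M where "M = (\<lambda>s. \<alpha> s \<bullet> J (\<alpha>' s))"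
  have Te: "T s = x s * p s + y s * q s" for s unfolding T_def x_def y_def p_def q_def by (simp add: inner_prod_def)
  have Me: "M s = y s * p s - x s * q s" for s unfolding M_def J_def x_def y_def p_def q_def by (simp add: inner_prod_def)
  have ke: "q2 s * p s - p2 s * q s = K h (T s) (M s)" for s
    using curv[of s] unfolding T_def M_def J_def p_def q_def p2_def q2_def by (simp add: inner_prod_def)
  have Tf: "T = (\<lambda>s. x s * p s + y s * q s)" using Te by auto
  have Mf: "M = (\<lambda>s. y s * p s - x s * q s)" using Me by auto
  have dT: "(T has_real_derivative (1 + K h (T s) (M s) * M s)) (at s)" for s
  proof -
    have d: "(T has_real_derivative (p s * p s + p2 s * x s + (q s * q s + q2 s * y s))) (at s)"
      unfolding Tf by (intro DERIV_add DERIV_mult dp dq dx dy)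
    have "p s * p s + p2 s * x s + (q s * q s + q2 s * y s) = 1 + (q2 s * p s - p2 s * q s) * (y s * p s - x s * q s)"
    proof -
      have e1: "p s * p s + q s * q s = 1" using u[of s] by (simp add: power2_eq_square)
      show ?thesis using e1 o[of s] by algebra
    qed
    thus ?thesis using d ke[of s] Me[of s] by simp
  qed
  have dM: "(M has_real_derivative (- (K h (T s) (M s) * T s))) (at s)" for s
  proof -
    have d: "(M has_real_derivative (q s * p s + p2 s * y s - (p s * q s + q2 s * x s))) (at s)"
      unfolding Mf by (intro DERIV_diff DERIV_mult dp dq dx dy)
    have "q s * p s + p2 s * y s - (p s * q s + q2 s * x s) = - ((q2 s * p s - p2 s * q s) * (x s * p s + y s * q s))"
    proof -
      have e1: "p s * p s + q s * q s = 1" using u[of s] by (simp add: power2_eq_square)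
      show ?thesis using e1 o[of s] by algebra
    qed
    thus ?thesis using d ke[of s] Te[of s] by simp
  qed
  have rr: "(x s)^2 + (y s)^2 = (T s)^2 + (M s)^2" for s
  proof -
    have e1: "p s * p s + q s * q s = 1" using u[of s] by (simp add: power2_eq_square)
    show ?thesis unfolding Te Me power2_eq_square using e1 by algebra
  qed
  have pb: "\<bar>p s\<bar> \<le> 1" "\<bar>q s\<bar> \<le> 1" for s
  proof -
    have "(p s)^2 \<le> 1" "(q s)^2 \<le> 1" using u[of s] by (smt (verit) zero_le_power2)+
    thus "\<bar>p s\<bar> \<le> 1" "\<bar>q s\<bar> \<le> 1" by (simp_all add: abs_square_le_1)
  qed
  define A where "A = \<bar>x 0\<bar> + \<bar>y 0\<bar>"
  define B where "B = A / 2 + 1"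
  have B: "B > 0" unfolding B_def A_def by (simp add: add_nonneg_pos)
  have bx: "\<bar>x s\<bar> \<le> \<bar>x 0\<bar> + \<bar>s\<bar>" for s by (rule lip_bound[OF dx pb(1)])
  have by': "\<bar>y s\<bar> \<le> \<bar>y 0\<bar> + \<bar>s\<bar>" for s by (rule lip_bound[OF dy pb(2)])
  have sxy: "\<bar>x s\<bar> + \<bar>y s\<bar> \<le> 2 * (B + \<bar>s\<bar>)" for s
  proof -
    have e: "2 * (B + \<bar>s\<bar>) = \<bar>x 0\<bar> + \<bar>y 0\<bar> + 2 + 2 * \<bar>s\<bar>" unfolding B_def A_def by (simp add: field_simps)
    show ?thesis using bx[of s] by'[of s] unfolding e by linarith
  qed
  have bT: "\<bar>T s\<bar> \<le> 2 * (B + \<bar>s\<bar>)" for s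
  proof -
    have "\<bar>T s\<bar> \<le> \<bar>x s\<bar> * \<bar>p s\<bar> + \<bar>y s\<bar> * \<bar>q s\<bar>" unfolding Te by (metis abs_mult abs_triangle_ineq)
    also have "\<dots> \<le> \<bar>x s\<bar> * 1 + \<bar>y s\<bar> * 1" using pb by (intro add_mono mult_left_mono) auto
    finally show ?thesis using sxy[of s] by simp
  qed
  have bM: "\<bar>M s\<bar> \<le> 2 * (B + \<bar>s\<bar>)" for s
  proof -
    have "\<bar>M s\<bar> \<le> \<bar>y s\<bar> * \<bar>p s\<bar> + \<bar>x s\<bar> * \<bar>q s\<bar>" unfolding Me by (metis abs_mult abs_triangle_ineq4)
    also have "\<dots> \<le> \<bar>y s\<bar> * 1 + \<bar>x s\<bar> * 1" using pb by (intro add_mono mult_left_mono) auto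
    finally show ?thesis using sxy[of s] by simp
  qed
  have bT0: "\<bar>T s\<bar> \<le> 2 * (B + s)" "\<bar>M s\<bar> \<le> 2 * (B + s)"
    "\<bar>- T (- s)\<bar> \<le> 2 * (B + s)" "\<bar>- M (- s)\<bar> \<le> 2 * (B + s)" if "s \<ge> 0" for s
    using bT[of s] bM[of s] bT[of "-s"] bM[of "-s"] that by auto
  interpret F: ode h 2 B T M
    by unfold_locales (use h B dT dM bT0 in auto)
  have dTb: "((\<lambda>s. - T (- s)) has_real_derivative (1 + K h (- T (- s)) (- M (- s)) * (- M (- s)))) (at s)" for s
  proof -
    have m: "((\<lambda>s. T (- s)) has_real_derivative - (1 + K h (T (- s)) (M (- s)) * M (- s))) (at s)"
      using dT[of "-s"] DERIV_mirror by blast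
    have "((\<lambda>s. - T (- s)) has_real_derivative (1 + K h (T (- s)) (M (- s)) * M (- s))) (at s)"
      using DERIV_minus[OF m] by (simp add: add.commute)
    thus ?thesis by (simp add: K_odd)
  qed
  have dMb: "((\<lambda>s. - M (- s)) has_real_derivative (- (K h (- T (- s)) (- M (- s)) * (- T (- s))))) (at s)" for s
  proof -
    have m: "((\<lambda>s. M (- s)) has_real_derivative - (- (K h (T (- s)) (M (- s)) * T (- s)))) (at s)"
      using dM[of "-s"] DERIV_mirror by blast
    have "((\<lambda>s. - M (- s)) has_real_derivative (- (K h (T (- s)) (M (- s)) * T (- s)))) (at s)"
      using DERIV_minus[OF m] by (simp add: add.commute)
    thus ?thesis by (simp add: K_odd)
  qed
  interpret G: ode h 2 B "\<lambda>s. - T (- s)" "\<lambda>s. - M (- s)"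
    by unfold_locales (use h B dTb dMb bT0 in auto)
  obtain S1 c1 where S1: "S1 \<ge> 0" "c1 > 0"
    "\<And>s. s \<ge> S1 \<Longrightarrow> T s > 0 \<and> c1 / (B + s) \<le> - M s / ((T s)^2 + (M s)^2)"
    using F.forward by blast
  obtain S2 c2 where S2: "S2 \<ge> 0" "c2 > 0"
    "\<And>s. s \<ge> S2 \<Longrightarrow> - T (- s) > 0 \<and> c2 / (B + s) \<le> - (- M (- s)) / ((- T (- s))^2 + (- M (- s))^2)"
    using G.forward by blast
  define S where "S = max S1 S2"
  have S: "S \<ge> 0" "S \<ge> S1" "S \<ge> S2" unfolding S_def using S1 by auto
  have nz: "\<alpha> s \<noteq> 0" if "\<bar>s\<bar> \<ge> S" for s
  proof
    assume a0: "\<alpha> s = 0"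
    hence "T s = 0" unfolding T_def by simp
    moreover have "T s \<noteq> 0"
    proof (cases "s \<ge> 0")
      case True thus ?thesis using S1(3)[of s] that S by simp
    next
      case False thus ?thesis using S2(3)[of "-s"] that S by simp
    qed
    ultimately show False by simp
  qed
  have rep_xy: "x s = norm (\<alpha> s) * cos (\<omega> s) \<and> y s = norm (\<alpha> s) * sin (\<omega> s)"
    if "\<alpha> s = norm (\<alpha> s) *\<^sub>R (cos (\<omega> s), sin (\<omega> s))" for s and \<omega> :: "real \<Rightarrow> real"
  proof -
    have "fst (\<alpha> s) = norm (\<alpha> s) * cos (\<omega> s)" "snd (\<alpha> s) = norm (\<alpha> s) * sin (\<omega> s)"
      by (subst that; simp)+
    thus ?thesis unfolding x_def y_def by simp
  qed
  show ?thesis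
  proof (intro exI[of _ S] conjI allI impI)
    show "\<alpha> s \<noteq> 0" if "\<bar>s\<bar> \<ge> S" for s using nz that by simp
  next
    fix \<omega> :: "real \<Rightarrow> real"
    assume a: "continuous_on {S..} \<omega> \<and> (\<forall>s\<ge>S. \<alpha> s = norm (\<alpha> s) *\<^sub>R (cos (\<omega> s), sin (\<omega> s)))"
    have d\<omega>: "(\<omega> has_real_derivative - M s / ((T s)^2 + (M s)^2)) (at s)" if s: "s > S" for s
    proof -
      have "(\<omega> has_real_derivative (x s * q s - y s * p s) / ((x s)^2 + (y s)^2)) (at s)"
      proof (rule omega_deriv[where U="{S<..}" and r="\<lambda>s. norm (\<alpha> s)"])
        show "open {S<..}" "s \<in> {S<..}" using s by auto
        show "isCont \<omega> s" using continuous_on_interior[of "{S..}" \<omega> s] a s by simp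
        show "x t = norm (\<alpha> t) * cos (\<omega> t) \<and> y t = norm (\<alpha> t) * sin (\<omega> t)" if "t \<in> {S<..}" for t
          using rep_xy[of t \<omega>] a that by simp
        show "norm (\<alpha> t) > 0" if "t \<in> {S<..}" for t using nz[of t] that S by simp
      qed (rule dx, rule dy)
      moreover have "x s * q s - y s * p s = - M s" unfolding Me by simp
      ultimately show ?thesis using rr[of s] by simp
    qed
    have "\<exists>N. \<forall>s\<ge>N. Z \<le> \<omega> s" for Z
      by (rule grow[OF S1(2) B S(1) d\<omega>]) (use S1(3) S in auto)
    thus "filterlim \<omega> at_top at_top"
      unfolding filterlim_at_top eventually_at_top_linorder by blast
  next
    fix \<omega> :: "real \<Rightarrow> real"
    assume a: "continuous_on {..-S} \<omega> \<and> (\<forall>s\<le>-S. \<alpha> s = norm (\<alpha> s) *\<^sub>R (cos (\<omega> s), sin (\<omega> s)))"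
    have d\<omega>: "((\<lambda>s. \<omega> (- s)) has_real_derivative M (- s) / ((T (- s))^2 + (M (- s))^2)) (at s)" if s: "s > S" for s
    proof -
      have "(\<omega> has_real_derivative (x (-s) * q (-s) - y (-s) * p (-s)) / ((x (-s))^2 + (y (-s))^2)) (at (-s))"
      proof (rule omega_deriv[where U="{..<-S}" and r="\<lambda>s. norm (\<alpha> s)"])
        show "open {..<-S}" "-s \<in> {..<-S}" using s by auto
        show "isCont \<omega> (-s)" using continuous_on_interior[of "{..-S}" \<omega> "-s"] a s by simp
        show "x t = norm (\<alpha> t) * cos (\<omega> t) \<and> y t = norm (\<alpha> t) * sin (\<omega> t)" if "t \<in> {..<-S}" for t
          using rep_xy[of t \<omega>] a that by simp
        show "norm (\<alpha> t) > 0" if "t \<in> {..<-S}" for t using nz[of t] that S by simp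
      qed (rule dx, rule dy)
      moreover have "x (-s) * q (-s) - y (-s) * p (-s) = - M (-s)" unfolding Me by simp
      ultimately have "(\<omega> has_real_derivative - M (-s) / ((T (-s))^2 + (M (-s))^2)) (at (-s))" using rr[of "-s"] by simp
      hence "((\<lambda>s. \<omega> (- s)) has_real_derivative - (- M (-s) / ((T (-s))^2 + (M (-s))^2))) (at s)"
        using DERIV_mirror by blast
      thus ?thesis by simp
    qed
    have "\<exists>N. \<forall>s\<ge>N. Z \<le> \<omega> (- s)" for Z
      by (rule grow[OF S2(2) B S(1) d\<omega>]) (use S2(3) S in auto)
    hence "\<exists>N. \<forall>s\<le>N. Z \<le> \<omega> s" for Z
    proof -
      obtain N where N: "\<forall>s\<ge>N. Z \<le> \<omega> (- s)" using \<open>\<And>Z. \<exists>N. \<forall>s\<ge>N. Z \<le> \<omega> (- s)\<close> by blast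
      have "Z \<le> \<omega> s" if "s \<le> -N" for s using N[rule_format, of "-s"] that by simp
      thus ?thesis by blast
    qed
    thus "filterlim \<omega> at_top at_bot"
      unfolding filterlim_at_top eventually_at_bot_linorder by blast
  qed
qed


end
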